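(* Let $g\geqslant1$ be odd. An element $u\in\mathbb{C}[\alpha,\gamma]$ is a unit modulo $J_g^-$ if and only if $\mathrm{ev}^\pm_j(u)\neq0$ for both signs and all $j=1,\ldots,(g-1)/2$, where $\mathrm{ev}^\pm_j(f)=f\big(\pm4(g-2j),\,0\big)$.
   Context: $\zeta_k^-\in\mathbb{C}[\alpha,\gamma]$: $\zeta^-_i=0$ for $i<0$, $\zeta^-_0=1$, $\zeta^-_{k+1}=\alpha\zeta^-_k-16k^2\zeta^-_{k-1}+2k(k-1)\gamma\zeta^-_{k-2}$ for $k$ odd and $\zeta^-_{k+1}=\alpha\zeta^-_k+2k(k-1)\gamma\zeta^-_{k-2}$ for $k$ even; $J^-_k=(\zeta^-_k,\zeta^-_{k+1},\zeta^-_{k+2})$. (These are the specializations at $\beta=-8$ of $\zeta_{k+1}=\alpha\zeta_k+k^2(\beta+(-1)^k8)\zeta_{k-1}+2k(k-1)\gamma\zeta_{k-2}$.) "Unit modulo $J_g^-$" means the image in $\mathbb{C}[\alpha,\gamma]/J_g^-$ is invertible; the maps $\mathrm{ev}^\pm_j$ vanish on $J_g^-$. *)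

theory Defs
  imports "HOL-Computational_Algebra.Polynomial"
begin

text \<open>C[alpha,gamma] is represented as complex poly poly: the outer variable is alpha,
  the coefficients are polynomials in gamma.\<close>

type_synonym bipoly = "complex poly poly"

definition var_alpha :: bipoly where "var_alpha = [:0, 1:]"
definition var_gamma :: bipoly where "var_gamma = [:[:0, 1:]:]"

definition eval2 :: "bipoly \<Rightarrow> complex \<Rightarrow> complex \<Rightarrow> complex" where
  "eval2 f a c = poly (map_poly (\<lambda>q. poly q c) f) a"

text \<open>zeta^-_k, with zeta^-_i = 0 for i<0, zeta^-_0 = 1 and
  zeta_{k+1} = alpha zeta_k - [k odd] 16 k^2 zeta_{k-1} + 2k(k-1) gamma zeta_{k-2}.
  For k = 0,1 the terms with negative index have zero coefficient or vanish.\<close>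
fun zeta_minus :: "nat \<Rightarrow> bipoly" where
  "zeta_minus 0 = 1"
| "zeta_minus (Suc 0) = var_alpha * zeta_minus 0"
| "zeta_minus (Suc (Suc 0)) = var_alpha * zeta_minus 1 - of_nat (16 * 1^2) * zeta_minus 0"
| "zeta_minus (Suc (Suc (Suc n))) =
     var_alpha * zeta_minus (Suc (Suc n))
     - (if odd (Suc (Suc n)) then of_nat (16 * (Suc (Suc n))^2) * zeta_minus (Suc n) else 0)
     + of_nat (2 * (Suc (Suc n)) * (Suc n)) * var_gamma * zeta_minus n"

definition unit_mod_J :: "nat \<Rightarrow> bipoly \<Rightarrow> bool" where
  "unit_mod_J g u \<longleftrightarrow> (\<exists>v a b c. u * v = 1 + a * zeta_minus g + b * zeta_minus (g + 1)
                                         + c * zeta_minus (g + 2))"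

definition ev :: "nat \<Rightarrow> complex \<Rightarrow> nat \<Rightarrow> bipoly \<Rightarrow> complex" where
  "ev g s j f = eval2 f (s * 4 * of_int (int g - 2 * int j)) 0"

end

theory Submission
  imports Defs "HOL-Computational_Algebra.Computational_Algebra" "HOL-Computational_Algebra.Field_as_Ring"
begin

definition red :: "bipoly \<Rightarrow> complex poly" where
  "red f = map_poly (\<lambda>q. poly q 0) f"

lemma coeff_red: "coeff (red f) n = poly (coeff f n) 0"
  by (simp add: red_def coeff_map_poly)

lemma red_add: "red (f + h) = red f + red h"
  by (intro poly_eqI) (simp add: coeff_red)

lemma red_diff: "red (f - h) = red f - red h"
  by (intro poly_eqI) (simp add: coeff_red)

lemma red_smult: "red (smult a f) = smult (poly a 0) (red f)"
  by (intro poly_eqI) (simp add: coeff_red)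

lemma red_mult: "red (f * h) = red f * red h"
proof (induction f)
  case 0
  then show ?case by (simp add: red_def)
next
  case (pCons a p)
  have "red (pCons a p * h) = red (smult a h + pCons 0 (p * h))"
    by simp
  also have "\<dots> = smult (poly a 0) (red h) + pCons 0 (red (p * h))"
    by (simp only: red_add red_smult) (simp add: red_def map_poly_pCons)
  also have "\<dots> = pCons (poly a 0) (red p) * red h"
    using pCons by simp
  also have "pCons (poly a 0) (red p) = red (pCons a p)"
    by (simp add: red_def map_poly_pCons)
  finally show ?case .
qed

lemma red_one [simp]: "red 1 = 1"
  by (intro poly_eqI) (simp add: coeff_red coeff_1)

lemma red_of_nat [simp]: "red (of_nat n) = of_nat n"
  by (intro poly_eqI) (simp add: coeff_red of_nat_poly coeff_pCons split: nat.splits)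

lemma red_numeral [simp]: "red (numeral n) = numeral n"
  using red_of_nat[of "numeral n"] by simp

lemma red_alpha [simp]: "red var_alpha = [:0, 1:]"
  by (intro poly_eqI) (simp add: coeff_red var_alpha_def coeff_pCons split: nat.splits)

lemma red_gamma [simp]: "red var_gamma = 0"
  by (intro poly_eqI) (simp add: coeff_red var_gamma_def coeff_pCons split: nat.splits)

lemma red_power: "red (f ^ n) = red f ^ n"
  by (induction n) (simp_all add: red_mult)

lemma zeta_rec:
  assumes "k \<ge> 2"
  shows "zeta_minus (Suc k) = var_alpha * zeta_minus k
     - (if odd k then of_nat (16 * k^2) * zeta_minus (k - 1) else 0)
     + of_nat (2 * k * (k - 1)) * var_gamma * zeta_minus (k - 2)"
proof -
  obtain n where k: "k = Suc (Suc n)" using assms by (metis add_2_eq_Suc le_Suc_ex)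
  show ?thesis unfolding k by simp
qed

abbreviation z :: "nat \<Rightarrow> complex poly" where "z k \<equiv> red (zeta_minus k)"

lemma z_odd: "z (2*m+1) = [:0,1:] * z (2*m)"
proof (cases m)
  case 0
  then show ?thesis by (simp add: red_mult)
next
  case (Suc n)
  have "zeta_minus (Suc (2*m)) = var_alpha * zeta_minus (2*m)
     - (if odd (2*m) then of_nat (16 * (2*m)^2) * zeta_minus (2*m - 1) else 0)
     + of_nat (2 * (2*m) * (2*m - 1)) * var_gamma * zeta_minus (2*m - 2)"
    by (rule zeta_rec) (use Suc in auto)
  then show ?thesis by (simp add: red_mult red_add red_diff red_power)
qed

lemma z_even: "z (2*m+2) = ([:0,1:]^2 - of_nat (16*(2*m+1)^2)) * z (2*m)"
proof -
  have h: "z (2*m+2) = [:0,1:] * z (2*m+1) - of_nat (16*(2*m+1)^2) * z (2*m)"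
  proof (cases m)
    case 0
    then show ?thesis by (simp add: red_mult red_diff numeral_2_eq_2)
  next
    case (Suc n)
    have "zeta_minus (Suc (2*m+1)) = var_alpha * zeta_minus (2*m+1)
       - (if odd (2*m+1) then of_nat (16 * (2*m+1)^2) * zeta_minus (2*m+1 - 1) else 0)
       + of_nat (2 * (2*m+1) * (2*m+1 - 1)) * var_gamma * zeta_minus (2*m+1 - 2)"
      by (rule zeta_rec) (use Suc in auto)
    then show ?thesis by (simp add: red_mult red_add red_diff red_power)
  qed
  have o: "z (2*m+1) = [:0,1:]*z(2*m)" by (rule z_odd)
  show ?thesis unfolding h o by (simp add: algebra_simps power2_eq_square)
qed

lemma z_roots: "poly (z (2*m)) r = 0 \<longleftrightarrow> (\<exists>i<m. r^2 = of_nat (16*(2*i+1)^2))"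
proof (induction m)
  case 0
  then show ?case by simp
next
  case (Suc m)
  have e: "2 * Suc m = 2*m+2" by simp
  show ?case unfolding e z_even using Suc
    by (auto simp: less_Suc_eq)
qed

definition JJ :: "nat \<Rightarrow> bipoly \<Rightarrow> bool" where
  "JJ g x \<longleftrightarrow> (\<exists>a b c. x = a * zeta_minus g + b * zeta_minus (g + 1) + c * zeta_minus (g + 2))"

lemma JJ_add: "JJ g x \<Longrightarrow> JJ g y \<Longrightarrow> JJ g (x + y)"
proof -
  assume "JJ g x" "JJ g y"
  then obtain a b c a' b' c' where
    "x = a * zeta_minus g + b * zeta_minus (g + 1) + c * zeta_minus (g + 2)"
    "y = a' * zeta_minus g + b' * zeta_minus (g + 1) + c' * zeta_minus (g + 2)"
    unfolding JJ_def by blast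
  then have "x + y = (a+a') * zeta_minus g + (b+b') * zeta_minus (g + 1) + (c+c') * zeta_minus (g + 2)"
    by (simp add: algebra_simps)
  then show ?thesis unfolding JJ_def by blast
qed

lemma JJ_mult: "JJ g x \<Longrightarrow> JJ g (y * x)"
  unfolding JJ_def
  apply clarify
  subgoal for a b c
    by (rule exI[of _ "y*a"], rule exI[of _ "y*b"], rule exI[of _ "y*c"]) (simp add: algebra_simps)
  done

lemma JJ_neg: "JJ g x \<Longrightarrow> JJ g (- x)"
  using JJ_mult[of g x "-1"] by simp

lemma JJ_diff: "JJ g x \<Longrightarrow> JJ g y \<Longrightarrow> JJ g (x - y)"
  using JJ_add[of g x "-y"] JJ_neg[of g y] by simp

lemma JJ_z0: "JJ g (zeta_minus g)"
  unfolding JJ_def by (rule exI[of _ 1], rule exI[of _ 0], rule exI[of _ 0]) simp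
lemma JJ_z1: "JJ g (zeta_minus (g+1))"
  unfolding JJ_def by (rule exI[of _ 0], rule exI[of _ 1], rule exI[of _ 0]) simp
lemma JJ_z2: "JJ g (zeta_minus (g+2))"
  unfolding JJ_def by (rule exI[of _ 0], rule exI[of _ 0], rule exI[of _ 1]) simp

lemma inv_const: "c \<noteq> 0 \<Longrightarrow> [:[:inverse (of_nat c):]:] * (of_nat c :: bipoly) = 1"
  by (simp add: of_nat_poly one_pCons)

lemma JJ_cancel: "JJ g (of_nat c * x) \<Longrightarrow> c \<noteq> 0 \<Longrightarrow> JJ g x"
proof -
  assume a: "JJ g (of_nat c * x)" "c \<noteq> 0"
  have "x = [:[:inverse (of_nat c):]:] * (of_nat c * x)"
    by (simp only: mult.assoc[symmetric] inv_const[OF a(2)] mult_1_left)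
  then show ?thesis using JJ_mult[OF a(1)] by metis
qed

lemma JJ_one: "JJ 1 1"
proof -
  have "of_nat 16 * (1::bipoly) = var_alpha * zeta_minus 1 - zeta_minus 2"
    by (simp add: numeral_2_eq_2)
  moreover have "JJ 1 (var_alpha * zeta_minus 1 - zeta_minus 2)"
    using JJ_diff[OF JJ_mult[OF JJ_z0[of 1], of var_alpha] JJ_z1[of 1]] by (simp add: numeral_2_eq_2)
  ultimately show ?thesis using JJ_cancel[of 1 16 1] by simp
qed

lemma JJ_gamma: "JJ (2*m+1) (var_gamma ^ (2*m))"
proof (induction m)
  case 0
  then show ?case using JJ_one by simp
next
  case (Suc m)
  define g where "g = 2*m+3"
  have g1: "2 * Suc m + 1 = g" and g2: "2 * Suc m = 2*m+2" by (simp_all add: g_def)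
  have r1: "zeta_minus (Suc (g+1)) = var_alpha * zeta_minus (g+1)
     - (if odd (g+1) then of_nat (16 * (g+1)^2) * zeta_minus (g+1 - 1) else 0)
     + of_nat (2 * (g+1) * (g+1 - 1)) * var_gamma * zeta_minus (g+1 - 2)"
    by (rule zeta_rec) (simp add: g_def)
  have r1': "zeta_minus (g+2) = var_alpha * zeta_minus (g+1)
     + of_nat (2 * (g+1) * g) * (var_gamma * zeta_minus (2*m+2))"
    using r1 by (simp add: g_def algebra_simps)
  have A: "JJ g (var_gamma * zeta_minus (2*m+2))"
  proof (rule JJ_cancel)
    show "2 * (g+1) * g \<noteq> 0" by (simp add: g_def)
    have "of_nat (2 * (g+1) * g) * (var_gamma * zeta_minus (2*m+2)) =
       zeta_minus (g+2) - var_alpha * zeta_minus (g+1)" using r1' by simp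
    moreover have "JJ g (zeta_minus (g+2) - var_alpha * zeta_minus (g+1))"
      by (rule JJ_diff[OF JJ_z2 JJ_mult[OF JJ_z1]])
    ultimately show "JJ g (of_nat (2 * (g+1) * g) * (var_gamma * zeta_minus (2*m+2)))" by simp
  qed
  have r2: "zeta_minus (Suc g) = var_alpha * zeta_minus g
     - (if odd g then of_nat (16 * g^2) * zeta_minus (g - 1) else 0)
     + of_nat (2 * g * (g - 1)) * var_gamma * zeta_minus (g - 2)"
    by (rule zeta_rec) (simp add: g_def)
  have gm1: "g - 1 = 2*m+2" and gm2: "g - 2 = 2*m+1" by (simp_all add: g_def)
  have og: "odd g" by (simp add: g_def)
  have E2: "zeta_minus (g+1) = var_alpha * zeta_minus g - of_nat (16*g^2) * zeta_minus (2*m+2)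
      + of_nat (2*g*(g-1)) * var_gamma * zeta_minus (2*m+1)"
    using r2 by (simp only: og not_False_eq_True if_True gm1 gm2 Suc_eq_plus1)
  have r2': "of_nat (2 * g * (g - 1)) * (var_gamma * var_gamma * zeta_minus (2*m+1)) =
      var_gamma * zeta_minus (g+1) - var_alpha * (var_gamma * zeta_minus g)
      + of_nat (16 * g^2) * (var_gamma * zeta_minus (2*m+2))"
    unfolding E2 by (simp add: algebra_simps)
  have B: "JJ g (var_gamma * var_gamma * zeta_minus (2*m+1))"
  proof (rule JJ_cancel)
    show "2 * g * (g - 1) \<noteq> 0" by (simp add: g_def)
    have "JJ g (var_gamma * zeta_minus (g+1) - var_alpha * (var_gamma * zeta_minus g)
      + of_nat (16 * g^2) * (var_gamma * zeta_minus (2*m+2)))"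
      by (intro JJ_add JJ_diff JJ_mult JJ_z0 JJ_z1 A)
    then show "JJ g (of_nat (2 * g * (g - 1)) * (var_gamma * var_gamma * zeta_minus (2*m+1)))"
      using r2' by simp
  qed
  from Suc.IH obtain a b c where abc: "var_gamma ^ (2*m) = a * zeta_minus (2*m+1)
     + b * zeta_minus (2*m+1+1) + c * zeta_minus (2*m+1+2)" unfolding JJ_def by blast
  have "var_gamma ^ (2 * Suc m) = a * (var_gamma * var_gamma * zeta_minus (2*m+1))
     + (b * var_gamma) * (var_gamma * zeta_minus (2*m+2)) + (c * var_gamma * var_gamma) * zeta_minus g"
    using abc by (simp add: g_def algebra_simps power2_eq_square numeral_3_eq_3)
  also have "JJ g \<dots>" by (intro JJ_add JJ_mult A B JJ_z0)
  finally show ?case unfolding g1 .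
qed

lemma red_gamma_dvd: "red h = 0 \<Longrightarrow> \<exists>w. h = var_gamma * w"
proof -
  assume h: "red h = 0"
  have "\<forall>n. [:0,1:] dvd coeff h n"
  proof
    fix n
    have "poly (coeff h n) 0 = 0" using h coeff_red[of h n] by simp
    then show "[:0,1:] dvd coeff h n" using poly_eq_0_iff_dvd[of "coeff h n" 0] by simp
  qed
  then have "var_gamma dvd h" unfolding var_gamma_def by (subst const_poly_dvd_iff) simp
  then show ?thesis by (auto elim!: dvdE)
qed

lemma geom: "(1 + t) * (\<Sum>i<n. (-t)^i) = 1 - (-t)^n" for t :: bipoly
  by (induction n) (simp_all add: algebra_simps)

lemma C_red: "red (map_poly (\<lambda>c. [:c:]) p) = p"
  by (intro poly_eqI) (simp add: coeff_red coeff_map_poly)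

lemma ev_red: "ev g s j f = poly (red f) (s * 4 * of_int (int g - 2 * int j))"
  by (simp add: ev_def eval2_def red_def)

theorem lemma5p3:
  fixes g :: nat and u :: bipoly
  assumes "g \<ge> 1" and "odd g"
  shows "unit_mod_J g u \<longleftrightarrow>
           (\<forall>s \<in> {1, -1}. \<forall>j \<in> {1 .. (g - 1) div 2}. ev g s j u \<noteq> 0)"
proof -
  obtain m where g: "g = 2*m+1" using assms(2) by (metis oddE)
  have gd: "(g - 1) div 2 = m" using g by simp
  define P where "P = z (2*m)"
  have zg: "z g = [:0,1:] * P" unfolding P_def g by (rule z_odd)
  have zg1: "z (g+1) = ([:0,1:]^2 - of_nat (16*g^2)) * P"
    unfolding P_def using z_even[of m] g by (simp add: add.commute)
  have zg2: "z (g+2) = [:0,1:] * z (g+1)"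
    using z_odd[of "m+1"] g by (simp add: algebra_simps)
  have pts: "(s * 4 * of_int (int g - 2 * int j))^2 = (of_nat (16*(2*(m-j)+1)^2) :: complex)"
    if "s \<in> {1,-1}" "j \<in> {1..m}" for s :: complex and j
  proof -
    have "int g - 2 * int j = int (2*(m-j)+1)" using that(2) g by auto
    then have "(of_int (int g - 2 * int j) :: complex) = of_nat (2*(m-j)+1)" by simp
    moreover have "s^2 = 1" using that(1) by auto
    ultimately show ?thesis by (simp add: power_mult_distrib)
  qed
  have Proot: "poly P (s * 4 * of_int (int g - 2 * int j)) = 0"
    if "s \<in> {1,-1}" "j \<in> {1..m}" for s :: complex and j
    unfolding P_def z_roots using pts[OF that] that(2) by (intro exI[of _ "m-j"]) auto
  show ?thesis
  proof
    assume "unit_mod_J g u"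
    then obtain v a b c where eq: "u * v = 1 + a * zeta_minus g + b * zeta_minus (g + 1)
                                         + c * zeta_minus (g + 2)" unfolding unit_mod_J_def by blast
    show "\<forall>s \<in> {1, -1}. \<forall>j \<in> {1 .. (g - 1) div 2}. ev g s j u \<noteq> 0"
    proof (intro ballI)
      fix s :: complex and j assume s: "s \<in> {1,-1}" and j: "j \<in> {1..(g-1) div 2}"
      define r where "r = s * 4 * of_int (int g - 2 * int j)"
      have pr: "poly P r = 0" unfolding r_def using Proot s j gd by simp
      have "red (u * v) = red (1 + a * zeta_minus g + b * zeta_minus (g + 1)
                                         + c * zeta_minus (g + 2))" using eq by simp
      then have "red u * red v = 1 + red a * z g + red b * z (g+1) + red c * z (g+2)"
        by (simp add: red_mult red_add)
      then have "poly (red u * red v) r = poly (1 + red a * z g + red b * z (g+1) + red c * z (g+2)) r"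
        by simp
      then have "poly (red u) r * poly (red v) r = 1" unfolding zg2 zg1 zg using pr by simp
      then show "ev g s j u \<noteq> 0" unfolding ev_red r_def[symmetric] by auto
    qed
  next
    assume H: "\<forall>s \<in> {1, -1}. \<forall>j \<in> {1 .. (g - 1) div 2}. ev g s j u \<noteq> 0"
    define u0 where "u0 = red u"
    have noroot: "poly u0 r \<noteq> 0" if rt: "poly P r = 0" for r
    proof -
      obtain i where i: "i < m" "r^2 = of_nat (16*(2*i+1)^2)"
        using rt[unfolded P_def z_roots] by blast
      define j where "j = m - i"
      have j: "j \<in> {1..(g-1) div 2}" using i(1) gd unfolding j_def by auto
      have oi: "(of_int (int g - 2 * int j) :: complex) = of_nat (2*i+1)"
        using i(1) g unfolding j_def by (simp add: of_nat_diff)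
      have "r * r = (4 * of_nat (2*i+1)) * (4 * of_nat (2*i+1))"
        using i(2) by (simp add: power2_eq_square algebra_simps)
      then have "r = 4 * of_nat (2*i+1) \<or> r = - (4 * of_nat (2*i+1))"
        by (simp add: square_eq_iff)
      then obtain s :: complex where s: "s \<in> {1,-1}" "r = s * 4 * of_int (int g - 2 * int j)"
        unfolding oi by (metis insertCI mult.assoc mult_1_left mult_minus1)
      show ?thesis using H s j unfolding u0_def ev_red by auto
    qed
    have P0: "P \<noteq> 0"
    proof
      assume "P = 0"
      then have "poly P 0 = 0" by simp
      then obtain i where "(0::complex)^2 = of_nat (16*(2*i+1)^2)"
        unfolding P_def z_roots by blast
      then show False by (simp del: of_nat_mult of_nat_power)
    qed
    define d where "d = gcd u0 P"
    have "degree d = 0"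
    proof (rule ccontr)
      assume "degree d \<noteq> 0"
      then have "\<not> constant (poly d)" by (simp add: constant_degree)
      then obtain r where r: "poly d r = 0" using fundamental_theorem_of_algebra by blast
      have "d dvd P" "d dvd u0" unfolding d_def by simp_all
      then have "poly P r = 0" "poly u0 r = 0" using r by (auto elim!: dvdE)
      then show False using noroot by blast
    qed
    moreover have "d \<noteq> 0" unfolding d_def using P0 by simp
    ultimately have "is_unit d" by (simp add: is_unit_iff_degree)
    then have d1: "d = 1" unfolding d_def by (simp add: is_unit_gcd_iff)
    define x where "x = fst (bezout_coefficients u0 P)"
    define y where "y = snd (bezout_coefficients u0 P)"
    have bez: "x * u0 + y * P = 1"
      using bezout_coefficients_fst_snd[of u0 P] d1 unfolding x_def y_def d_def by simp
    define c where "c = 16 * g^2"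
    have c0: "c \<noteq> 0" unfolding c_def using assms(1) by simp
    define e where "e = var_alpha * zeta_minus g - zeta_minus (g+1)"
    have Je: "JJ g e" unfolding e_def by (rule JJ_diff[OF JJ_mult[OF JJ_z0] JJ_z1])
    have re: "red e = of_nat c * P"
      unfolding e_def red_diff red_mult red_alpha zg zg1 c_def by (simp add: algebra_simps power2_eq_square)
    define y' where "y' = y * [:inverse (of_nat c):]"
    have "y' * red e = y * ([:inverse (of_nat c):] * of_nat c) * P"
      unfolding y'_def re by (simp add: mult.assoc)
    also have "[:inverse (of_nat c):] * of_nat c = (1::complex poly)"
      using c0 by (simp add: of_nat_poly one_pCons)
    finally have ye: "y' * red e = y * P" by simp
    define A where "A = map_poly (\<lambda>c. [:c:]) x"
    define B where "B = map_poly (\<lambda>c. [:c:]) y'"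
    have "red (A * u + B * e - 1) = 0"
      unfolding A_def B_def red_diff red_add red_mult C_red red_one ye
      using bez unfolding u0_def by simp
    then obtain w where w: "A * u + B * e - 1 = var_gamma * w" using red_gamma_dvd by blast
    define t where "t = var_gamma * w"
    define S where "S = (\<Sum>i<2*m. (-t)^i)"
    have Au: "A * u = (1 + t) - B * e" using w unfolding t_def by (simp add: algebra_simps)
    have "u * (A * S) = (A * u) * S" by (simp add: algebra_simps)
    also have "\<dots> = ((1 + t) - B * e) * S" by (simp only: Au)
    also have "\<dots> = (1 + t) * S - (B * S) * e" by (simp add: algebra_simps)
    also have "\<dots> = 1 + (- (w^(2*m) * var_gamma^(2*m)) - (B * S) * e)"
      unfolding S_def geom t_def by (simp add: power_mult_distrib algebra_simps)
    finally have uv: "u * (A * S) = 1 + (- (w^(2*m) * var_gamma^(2*m)) - (B * S) * e)" .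
    have "JJ g (- (w^(2*m) * var_gamma^(2*m)) - (B * S) * e)"
      using JJ_gamma[of m] g by (intro JJ_diff JJ_neg JJ_mult Je) simp_all
    then obtain a b c' where abc: "- (w^(2*m) * var_gamma^(2*m)) - (B * S) * e
       = a * zeta_minus g + b * zeta_minus (g + 1) + c' * zeta_minus (g + 2)"
      unfolding JJ_def by blast
    show "unit_mod_J g u" unfolding unit_mod_J_def
      using uv abc by (intro exI[of _ "A*S"] exI[of _ a] exI[of _ b] exI[of _ c']) (simp add: add.assoc)
  qed
qed

end
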